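(* Let $1\le k\le n$ and $1\le m<n$ be integers. Let $\mathcal{C}=\{d_1,\dots,d_n\}$ be a corpus of $n$ items of which exactly $m$ are useful (set $\mathcal{C}^+$) and $n-m$ non-useful (set $\mathcal{C}^-$). Define $\mathrm{MU}(i)=\mathbb{1}[i\le k]$. Let $\pi$ be any probability distribution over the set $S_n$ of rankings (permutations) of $\mathcal{C}$, with expected exposure vector $\epsilon_d=\sum_{\sigma\in S_n}\pi(\sigma)\,\mathrm{MU}(\bar\sigma_d)$, where $\bar\sigma_d$ is the rank of $d$ in $\sigma$. Define the target exposure vector $\epsilon^*$ by: for $d\in\mathcal{C}^+$, $\epsilon^*_d=1$ if $m\le k$ and $k/m$ if $m>k$; for $d\in\mathcal{C}^-$, $\epsilon^*_d=\frac{k-m}{n-m}$ if $m\le k$ and $0$ if $m>k$. Then: if $m\le k$, $\langle\epsilon,\epsilon^*\rangle\in\big[0,\ m+\frac{(k-m)^2}{n-m}\big]$; if $m>k$, $\langle\epsilon,\epsilon^*\rangle\in\big[0,\ \frac{k^2}{m}\big]$.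
   Context: $\langle\epsilon,\epsilon^*\rangle$ is the expected exposure relevance (EE-R) of the stochastic ranking policy $\pi$ under a top-$k$ truncation machine-user browsing model; $\epsilon^*$ is the exposure of an oracle retriever ranking all useful items above all non-useful ones uniformly at random within each group. *)

theory Defs
  imports "HOL-Analysis.Analysis" "HOL-Combinatorics.Permutations"
begin

text \<open>Corpus items are 0,...,n-1. A ranking is a permutation sigma of the items, with
sigma d the 0-based position of item d, so the (1-based) rank is sigma d + 1.\<close>

definition rankings :: "nat \<Rightarrow> (nat \<Rightarrow> nat) set" where
  "rankings n = {\<sigma>. \<sigma> permutes {..<n}}"

definition MU :: "nat \<Rightarrow> nat \<Rightarrow> real" where
  "MU k i = (if i \<le> k then 1 else 0)"

definition is_distribution :: "nat \<Rightarrow> ((nat \<Rightarrow> nat) \<Rightarrow> real) \<Rightarrow> bool" where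
  "is_distribution n \<pi> \<longleftrightarrow> (\<forall>\<sigma>\<in>rankings n. \<pi> \<sigma> \<ge> 0) \<and> (\<Sum>\<sigma>\<in>rankings n. \<pi> \<sigma>) = 1"

definition exposure :: "nat \<Rightarrow> nat \<Rightarrow> ((nat \<Rightarrow> nat) \<Rightarrow> real) \<Rightarrow> nat \<Rightarrow> real" where
  "exposure n k \<pi> d = (\<Sum>\<sigma>\<in>rankings n. \<pi> \<sigma> * MU k (\<sigma> d + 1))"

definition target_exposure :: "nat \<Rightarrow> nat \<Rightarrow> nat set \<Rightarrow> nat \<Rightarrow> real" where
  "target_exposure n k U d =
     (let m = card U in
      if d \<in> U then (if m \<le> k then 1 else real k / real m)
      else (if m \<le> k then (real k - real m) / (real n - real m) else 0))"

definition EER :: "nat \<Rightarrow> nat \<Rightarrow> nat set \<Rightarrow> ((nat \<Rightarrow> nat) \<Rightarrow> real) \<Rightarrow> real" where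
  "EER n k U \<pi> = (\<Sum>d<n. exposure n k \<pi> d * target_exposure n k U d)"

end

theory Submission
  imports Defs
begin

lemma card_A:
  assumes "\<sigma> permutes {..<n}" "k \<le> n"
  shows "card {d\<in>{..<n}. \<sigma> d < k} = k"
proof -
  have bij: "bij_betw \<sigma> {..<n} {..<n}" using assms(1) permutes_imp_bij by blast
  have inj: "inj_on \<sigma> {d\<in>{..<n}. \<sigma> d < k}"
    using bij unfolding bij_betw_def by (auto intro: inj_on_subset)
  have img: "\<sigma> ` {d\<in>{..<n}. \<sigma> d < k} = {..<k}"
  proof
    show "\<sigma> ` {d\<in>{..<n}. \<sigma> d < k} \<subseteq> {..<k}" by auto
    show "{..<k} \<subseteq> \<sigma> ` {d\<in>{..<n}. \<sigma> d < k}"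
    proof
      fix x assume x: "x \<in> {..<k}"
      then have "x \<in> {..<n}" using assms(2) by auto
      then obtain d where "d \<in> {..<n}" "\<sigma> d = x" using bij unfolding bij_betw_def by (metis imageE)
      then show "x \<in> \<sigma> ` {d\<in>{..<n}. \<sigma> d < k}" using x by auto
    qed
  qed
  show ?thesis using card_image[OF inj] img by simp
qed

lemma per_sigma:
  assumes "\<sigma> permutes {..<n}" "1 \<le> k" "k \<le> n" "1 \<le> m" "m < n"
    and U: "U \<subseteq> {..<n}" "card U = m"
  shows "0 \<le> (\<Sum>d<n. MU k (\<sigma> d + 1) * target_exposure n k U d)
    \<and> (\<Sum>d<n. MU k (\<sigma> d + 1) * target_exposure n k U d)
       \<le> (if m \<le> k then real m + (real k - real m)^2 / (real n - real m)
          else (real k)^2 / real m)"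
proof -
  let ?t = "target_exposure n k U"
  define A where "A = {d\<in>{..<n}. \<sigma> d < k}"
  have cA: "card A = k" unfolding A_def using card_A assms by blast
  have fA: "finite A" unfolding A_def by auto
  have finU: "finite U" using U finite_subset by blast
  have AU: "card (A \<inter> U) \<le> m" using U finU card_mono by (metis inf_le2)
  have eq: "(\<Sum>d<n. MU k (\<sigma> d + 1) * ?t d) = sum ?t A"
    unfolding A_def by (subst sum.inter_filter) (auto simp: MU_def intro!: sum.cong)
  have tnn: "?t d \<ge> 0" for d using assms
    by (auto simp: target_exposure_def Let_def)
  have "0 \<le> sum ?t A" using tnn by (simp add: sum_nonneg)
  moreover have "sum ?t A \<le> (if m \<le> k then real m + (real k - real m)^2 / (real n - real m)
          else (real k)^2 / real m)"
  proof (cases "m \<le> k")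
    case True
    define c where "c = (real k - real m) / (real n - real m)"
    have c1: "c \<le> 1" using assms True by (simp add: c_def divide_le_eq_1)
    have tc: "d \<in> A \<Longrightarrow> ?t d = c + (1 - c) * (if d \<in> U then 1 else 0)" for d
      using True U by (auto simp: target_exposure_def c_def)
    have "sum ?t A = (\<Sum>d\<in>A. c + (1 - c) * (if d \<in> U then 1 else 0))"
      using tc by (rule sum.cong[OF refl])
    also have "\<dots> = c * k + (1 - c) * card (A \<inter> U)"
      using fA cA by (simp add: sum.distrib sum_distrib_left[symmetric] sum.If_cases mult.commute)
    also have "\<dots> \<le> c * k + (1 - c) * m"
      using AU c1 by (intro add_left_mono mult_left_mono) auto
    also have "\<dots> = real m + (real k - real m)^2 / (real n - real m)"
    proof -
      have nz: "real n - real m \<noteq> 0" using assms by simp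
      have "c * k + (1 - c) * m = m + c * (real k - real m)" by (simp add: algebra_simps)
      moreover have "c * (real k - real m) = (real k - real m)^2 / (real n - real m)"
        by (simp add: c_def power2_eq_square)
      ultimately show ?thesis by simp
    qed
    finally show ?thesis using True by simp
  next
    case False
    have tc: "d \<in> A \<Longrightarrow> ?t d = (real k / real m) * (if d \<in> U then 1 else 0)" for d
      using False U by (auto simp: target_exposure_def)
    have "sum ?t A = (\<Sum>d\<in>A. (real k / real m) * (if d \<in> U then 1 else 0))"
      using tc by (rule sum.cong[OF refl])
    also have "\<dots> = (real k / real m) * card (A \<inter> U)"
    proof -
      have cnt: "(\<Sum>d\<in>A. (if d \<in> U then 1 else 0::real)) = real (card (A \<inter> U))"
        using fA by (simp add: sum.If_cases)
      show ?thesis unfolding sum_distrib_left[symmetric] cnt ..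
    qed
    also have "\<dots> \<le> (real k / real m) * k"
    proof -
      have "card (A \<inter> U) \<le> k" using cA fA by (metis card_mono inf_le1)
      then show ?thesis by (intro mult_left_mono) auto
    qed
    also have "\<dots> = (real k)^2 / real m" by (simp add: power2_eq_square)
    finally show ?thesis using False by simp
  qed
  ultimately show ?thesis using eq by simp
qed

theorem corollary2:
  fixes n k m :: nat and U :: "nat set" and \<pi> :: "(nat \<Rightarrow> nat) \<Rightarrow> real"
  assumes "1 \<le> k" "k \<le> n" "1 \<le> m" "m < n"
    and "U \<subseteq> {..<n}" "card U = m"
    and "is_distribution n \<pi>"
  shows "(m \<le> k \<longrightarrow> 0 \<le> EER n k U \<pi> \<and>
            EER n k U \<pi> \<le> real m + (real k - real m)^2 / (real n - real m))
       \<and> (k < m \<longrightarrow> 0 \<le> EER n k U \<pi> \<and> EER n k U \<pi> \<le> (real k)^2 / real m)"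
proof -
  let ?t = "target_exposure n k U"
  let ?S = "\<lambda>\<sigma>. (\<Sum>d<n. MU k (\<sigma> d + 1) * ?t d)"
  define B where "B = (if m \<le> k then real m + (real k - real m)^2 / (real n - real m)
          else (real k)^2 / real m)"
  have pnn: "\<And>\<sigma>. \<sigma> \<in> rankings n \<Longrightarrow> \<pi> \<sigma> \<ge> 0" and p1: "(\<Sum>\<sigma>\<in>rankings n. \<pi> \<sigma>) = 1"
    using assms(7) unfolding is_distribution_def by auto
  have PS: "\<And>\<sigma>. \<sigma> \<in> rankings n \<Longrightarrow> 0 \<le> ?S \<sigma> \<and> ?S \<sigma> \<le> B"
    unfolding B_def rankings_def using per_sigma assms by blast
  have E: "EER n k U \<pi> = (\<Sum>\<sigma>\<in>rankings n. \<pi> \<sigma> * ?S \<sigma>)"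
    unfolding EER_def exposure_def
    by (simp add: sum_distrib_left sum_distrib_right mult.assoc sum.swap[of _ "{..<n}"])
  have "0 \<le> (\<Sum>\<sigma>\<in>rankings n. \<pi> \<sigma> * ?S \<sigma>)"
    by (rule sum_nonneg) (metis PS pnn mult_nonneg_nonneg)
  moreover have "(\<Sum>\<sigma>\<in>rankings n. \<pi> \<sigma> * ?S \<sigma>) \<le> (\<Sum>\<sigma>\<in>rankings n. \<pi> \<sigma> * B)"
    using PS pnn by (intro sum_mono mult_left_mono) auto
  moreover have "(\<Sum>\<sigma>\<in>rankings n. \<pi> \<sigma> * B) = B" using p1 by (simp add: sum_distrib_right[symmetric])
  ultimately show ?thesis using E unfolding B_def by auto
qed

end
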